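(* Let $(X_1,M_1),\dots,(X_n,M_n)$ be i.i.d. copies of $(X,M)\sim\mathbb{P}_{X,M}$, $X\in\mathbb{R}^d$, $M\in\{0,1\}^d$, let $\{P_\theta:\theta\in\Theta\}$, $\Theta\subset\mathbb{R}^p$, be a model, and let $\theta_\infty^{\mathrm{MMD}}\in\arg\min_{\theta\in\Theta}\mathbb{E}_{M\sim\mathbb{P}_M}[\mathbb{D}^2(P_\theta^{(M)},\mathbb{P}_{X\mid M}^{(M)})]$. Define $\ell$, $\widehat L_n$, $L$ by $\ell(x,m;\theta)=\langle\Phi(P_\theta^{(m)}),\Phi(P_\theta^{(m)})\rangle_{\mathcal{H}}-2\langle\Phi(P_\theta^{(m)}),\Phi(x^{(m)})\rangle_{\mathcal{H}}$ for $m\neq(1,\dots,1)$, $\ell(x,(1,\dots,1);\theta)=0$, $\widehat L_n(\theta)=\frac1n\sum_{i=1}^n\ell(X_i,M_i;\theta)$, $L(\theta)=\mathbb{E}[\ell(X,M;\theta)]$. Assume: (a) there is an open neighborhood $O\subset\Theta$ of $\theta_\infty^{\mathrm{MMD}}$ such that for each $m$ in the support of $\mathbb{P}_M$ the map $\theta\mapsto\Phi(P_\theta^{(m)})$ is twice continuously Fréchet differentiable on $O$, with differentiation interchangeable with the integrals involved; (b) there is a compact $K\subset O$ whose interior contains $\theta_\infty^{\mathrm{MMD}}$ such that $\sup_{\theta\in K}\|\partial^2\Phi(P_\theta^{(m)})/\partial\theta_j\partial\theta_k\|_{\mathcal{H}}<\infty$ for every pair $(j,k)$ and every $m$ in the support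 of $\mathbb{P}_M$. Then the Hessians of $\widehat L_n$ and $L$ exist on $K$ and for every pair $(j,k)$, $$\sup_{\theta\in K}\Big|\frac{\partial^2\widehat L_n(\theta)}{\partial\theta_k\partial\theta_j}-\frac{\partial^2L(\theta)}{\partial\theta_k\partial\theta_j}\Big|\to0\quad\mathbb{P}_{X,M}\text{-almost surely as }n\to\infty.$$
   Context: $M_j=0$ means $X_j$ observed, $M_j=1$ missing; $\mathbb{P}_M$ is the law of $M$ and $\mathbb{P}_{X\mid M=m}$ the conditional law of $X$ given $M=m$. For $m\in\{0,1\}^d$, $x^{(m)}$ is the subvector of observed coordinates $\{j:m_j=0\}$ and $Q^{(m)}$ the law of $Y^{(m)}$, $Y\sim Q$. In every expectation over $M$ the empty pattern $(1,\dots,1)$ is excluded. $k$ is a positive definite kernel bounded by $1$, characteristic and dimension-independent (e.g. Gaussian kernel), with RKHS $\mathcal{H}$, mean embedding $\Phi(Q)=\mathbb{E}_{Y\sim Q}[k(Y,\cdot)]$, $\Phi(x)=k(x,\cdot)$, and MMD $\mathbb{D}(Q_1,Q_2)=\|\Phi(Q_1)-\Phi(Q_2)\|_{\mathcal{H}}$. *)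

theory Defs
  imports "HOL-Probability.Probability"
begin

text \<open>Missingness patterns: m :: 'd \<Rightarrow> bool, m j = True means coordinate j is
  MISSING (M_j = 1), m j = False means observed (M_j = 0).\<close>

definition all_missing :: "'d \<Rightarrow> bool" where
  "all_missing = (\<lambda>_. True)"

definition obs_space :: "((real^'d) \<times> ('d \<Rightarrow> bool)) measure" where
  "obs_space = borel \<Otimes>\<^sub>M count_space UNIV"

text \<open>Mean embedding Phi(Q^(m)) of the law of Y^(m), Y ~ Q, given the feature maps
  phi m (phi m y = Phi(y^(m)), which depends only on the observed coordinates of y).\<close>
definition emb :: "(('d \<Rightarrow> bool) \<Rightarrow> real^'d \<Rightarrow> 'h::{real_inner,banach,second_countable_topology})
    \<Rightarrow> (real^'d) measure \<Rightarrow> ('d \<Rightarrow> bool) \<Rightarrow> 'h" where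
  "emb phi Q m = (\<integral>y. phi m y \<partial>Q)"

definition law_M :: "((real^'d) \<times> ('d \<Rightarrow> bool)) measure \<Rightarrow> ('d \<Rightarrow> bool) measure" where
  "law_M nu = distr nu (count_space UNIV) snd"

definition cond_law :: "((real^'d) \<times> ('d \<Rightarrow> bool)) measure \<Rightarrow> ('d \<Rightarrow> bool) \<Rightarrow> (real^'d) measure" where
  "cond_law nu m = distr (uniform_measure nu {z \<in> space nu. snd z = m}) borel fst"

definition mmd_obj :: "(('d \<Rightarrow> bool) \<Rightarrow> real^'d \<Rightarrow> 'h::{real_inner,banach,second_countable_topology})
    \<Rightarrow> ('p \<Rightarrow> (real^'d) measure) \<Rightarrow> ((real^'d) \<times> ('d \<Rightarrow> bool)) measure \<Rightarrow> 'p \<Rightarrow> real" where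
  "mmd_obj phi P nu \<theta> = (\<integral>m. (if m = all_missing then 0
       else (norm (emb phi (P \<theta>) m - emb phi (cond_law nu m) m))\<^sup>2) \<partial>law_M nu)"

definition ell :: "(('d \<Rightarrow> bool) \<Rightarrow> real^'d \<Rightarrow> 'h::{real_inner,banach,second_countable_topology})
    \<Rightarrow> ('p \<Rightarrow> (real^'d) measure) \<Rightarrow> (real^'d) \<times> ('d \<Rightarrow> bool) \<Rightarrow> 'p \<Rightarrow> real" where
  "ell phi P z \<theta> = (if snd z = all_missing then 0
     else inner (emb phi (P \<theta>) (snd z)) (emb phi (P \<theta>) (snd z))
          - 2 * inner (emb phi (P \<theta>) (snd z)) (phi (snd z) (fst z)))"

definition C2_on :: "(real^'p) set \<Rightarrow> ((real^'p) \<Rightarrow> 'h::real_normed_vector)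
    \<Rightarrow> ((real^'p) \<Rightarrow> ((real^'p) \<Rightarrow>\<^sub>L 'h)) \<Rightarrow> ((real^'p) \<Rightarrow> ((real^'p) \<Rightarrow>\<^sub>L (real^'p) \<Rightarrow>\<^sub>L 'h)) \<Rightarrow> bool" where
  "C2_on U f D1 D2 \<longleftrightarrow>
     (\<forall>\<theta>\<in>U. (f has_derivative blinfun_apply (D1 \<theta>)) (at \<theta>)
            \<and> (D1 has_derivative blinfun_apply (D2 \<theta>)) (at \<theta>))
     \<and> continuous_on U D2"

definition has_hessian_at :: "((real^'p) \<Rightarrow> real) \<Rightarrow> ((real^'p) \<Rightarrow>\<^sub>L (real^'p) \<Rightarrow>\<^sub>L real) \<Rightarrow> (real^'p) \<Rightarrow> bool" where
  "has_hessian_at g H \<theta> \<longleftrightarrow>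
     (\<exists>g'. (\<forall>\<^sub>F \<theta>' in nhds \<theta>. (g has_derivative blinfun_apply (g' \<theta>')) (at \<theta>'))
           \<and> (g' has_derivative blinfun_apply H) (at \<theta>))"

definition hessian :: "((real^'p) \<Rightarrow> real) \<Rightarrow> (real^'p) \<Rightarrow> ((real^'p) \<Rightarrow>\<^sub>L (real^'p) \<Rightarrow>\<^sub>L real)" where
  "hessian g \<theta> = (THE H. has_hessian_at g H \<theta>)"

text \<open>Second partial derivative d^2 g / (d theta_k d theta_j) = d/d theta_k (d g / d theta_j).\<close>
definition second_partial :: "((real^'p) \<Rightarrow> real) \<Rightarrow> 'p \<Rightarrow> 'p \<Rightarrow> (real^'p) \<Rightarrow> real" where
  "second_partial g k j \<theta> = blinfun_apply (blinfun_apply (hessian g \<theta>) (axis k 1)) (axis j 1)"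

end

theory Submission
  imports Defs
begin

definition d2on :: "(real^'p) set \<Rightarrow> ((real^'p) \<Rightarrow> real) \<Rightarrow> ((real^'p) \<Rightarrow> ((real^'p) \<Rightarrow>\<^sub>L real))
   \<Rightarrow> ((real^'p) \<Rightarrow> (real^'p) \<Rightarrow> ((real^'p) \<Rightarrow>\<^sub>L real)) \<Rightarrow> bool" where
  "d2on U g g1 g2 \<longleftrightarrow> (\<forall>\<theta>\<in>U. (g has_derivative blinfun_apply (g1 \<theta>)) (at \<theta>) \<and> (g1 has_derivative g2 \<theta>) (at \<theta>))"

lemma d2on_hess:
  assumes U: "open U" and d: "d2on U g g1 g2" and th: "\<theta> \<in> U"
  shows "has_hessian_at g (Blinfun (g2 \<theta>)) \<theta>" "hessian g \<theta> = Blinfun (g2 \<theta>)"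
    "second_partial g k j \<theta> = blinfun_apply (g2 \<theta> (axis k 1)) (axis j 1)"
proof -
  have g2: "(g1 has_derivative g2 \<theta>) (at \<theta>)" using d th unfolding d2on_def by blast
  have bl: "bounded_linear (g2 \<theta>)" using has_derivative_bounded_linear[OF g2] .
  have ev: "\<forall>\<^sub>F \<theta>' in nhds \<theta>. \<theta>' \<in> U" using U th eventually_nhds by blast
  have ev1: "\<forall>\<^sub>F \<theta>' in nhds \<theta>. (g has_derivative blinfun_apply (g1 \<theta>')) (at \<theta>')"
    using ev by eventually_elim (use d in \<open>auto simp: d2on_def\<close>)
  show hh: "has_hessian_at g (Blinfun (g2 \<theta>)) \<theta>"
    unfolding has_hessian_at_def using ev1 g2 bounded_linear_Blinfun_apply[OF bl] by auto
  have uniq: "H = Blinfun (g2 \<theta>)" if hH: "has_hessian_at g H \<theta>" for H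
  proof -
    obtain g' where e': "\<forall>\<^sub>F \<theta>' in nhds \<theta>. (g has_derivative blinfun_apply (g' \<theta>')) (at \<theta>')"
      and h: "(g' has_derivative blinfun_apply H) (at \<theta>)"
      using hH unfolding has_hessian_at_def by blast
    have eq: "\<forall>\<^sub>F \<theta>' in nhds \<theta>. g' \<theta>' = g1 \<theta>'"
      using e' ev1 by eventually_elim (metis blinfun_apply_inject has_derivative_unique)
    have "(g1 has_derivative blinfun_apply H) (at \<theta>)"
    proof (rule has_derivative_transform_eventually[OF h])
      show "\<forall>\<^sub>F x' in at \<theta>. g' x' = g1 x'" using eq eventually_nhds_conv_at by blast
      show "g' \<theta> = g1 \<theta>" using eq eventually_nhds_x_imp_x by blast
    qed simp
    then have "blinfun_apply H = g2 \<theta>" using g2 has_derivative_unique by blast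
    then show ?thesis by (metis blinfun_apply_inverse)
  qed
  show hs: "hessian g \<theta> = Blinfun (g2 \<theta>)"
    unfolding hessian_def using hh uniq by blast
  show "second_partial g k j \<theta> = blinfun_apply (g2 \<theta> (axis k 1)) (axis j 1)"
    unfolding second_partial_def hs bounded_linear_Blinfun_apply[OF bl] ..
qed

lemma d2on_sum:
  assumes "finite A" "\<And>i. i \<in> A \<Longrightarrow> d2on U (g i) (g1 i) (g2 i)"
  shows "d2on U (\<lambda>\<theta>. \<Sum>i\<in>A. g i \<theta>) (\<lambda>\<theta>. \<Sum>i\<in>A. g1 i \<theta>) (\<lambda>\<theta> h. \<Sum>i\<in>A. g2 i \<theta> h)"
  unfolding d2on_def
proof
  fix \<theta> assume th: "\<theta> \<in> U"
  have a: "((\<lambda>\<theta>. \<Sum>i\<in>A. g i \<theta>) has_derivative (\<lambda>h. \<Sum>i\<in>A. blinfun_apply (g1 i \<theta>) h)) (at \<theta>)"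
    by (rule has_derivative_sum) (use assms th in \<open>auto simp: d2on_def\<close>)
  have b: "((\<lambda>\<theta>. \<Sum>i\<in>A. g1 i \<theta>) has_derivative (\<lambda>h. \<Sum>i\<in>A. g2 i \<theta> h)) (at \<theta>)"
    by (rule has_derivative_sum) (use assms th in \<open>auto simp: d2on_def\<close>)
  show "((\<lambda>\<theta>. \<Sum>i\<in>A. g i \<theta>) has_derivative blinfun_apply (\<Sum>i\<in>A. g1 i \<theta>)) (at \<theta>) \<and>
         ((\<lambda>\<theta>. \<Sum>i\<in>A. g1 i \<theta>) has_derivative (\<lambda>h. \<Sum>i\<in>A. g2 i \<theta> h)) (at \<theta>)"
  proof
    have "blinfun_apply (\<Sum>i\<in>A. g1 i \<theta>) = (\<lambda>h. \<Sum>i\<in>A. blinfun_apply (g1 i \<theta>) h)"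
      by (rule ext) (simp add: blinfun.sum_left)
    then show "((\<lambda>\<theta>. \<Sum>i\<in>A. g i \<theta>) has_derivative blinfun_apply (\<Sum>i\<in>A. g1 i \<theta>)) (at \<theta>)"
      using a by simp
  qed (rule b)
qed

lemma d2on_lin:
  assumes "d2on U g g1 g2" "d2on U f f1 f2"
  shows "d2on U (\<lambda>\<theta>. a * g \<theta> + b * f \<theta>) (\<lambda>\<theta>. a *\<^sub>R g1 \<theta> + b *\<^sub>R f1 \<theta>) (\<lambda>\<theta> h. a *\<^sub>R g2 \<theta> h + b *\<^sub>R f2 \<theta> h)"
  unfolding d2on_def
proof
  fix \<theta> assume th: "\<theta> \<in> U"
  have g: "(g has_derivative blinfun_apply (g1 \<theta>)) (at \<theta>)" "(g1 has_derivative g2 \<theta>) (at \<theta>)"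
   and f: "(f has_derivative blinfun_apply (f1 \<theta>)) (at \<theta>)" "(f1 has_derivative f2 \<theta>) (at \<theta>)"
    using assms th by (auto simp: d2on_def)
  have a: "((\<lambda>\<theta>. a * g \<theta> + b * f \<theta>) has_derivative (\<lambda>h. a * blinfun_apply (g1 \<theta>) h + b * blinfun_apply (f1 \<theta>) h)) (at \<theta>)"
    by (intro derivative_intros g f)
  have b: "((\<lambda>\<theta>. a *\<^sub>R g1 \<theta> + b *\<^sub>R f1 \<theta>) has_derivative (\<lambda>h. a *\<^sub>R g2 \<theta> h + b *\<^sub>R f2 \<theta> h)) (at \<theta>)"
    by (intro derivative_intros g f)
  show "((\<lambda>\<theta>. a * g \<theta> + b * f \<theta>) has_derivative blinfun_apply (a *\<^sub>R g1 \<theta> + b *\<^sub>R f1 \<theta>)) (at \<theta>) \<and>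
    ((\<lambda>\<theta>. a *\<^sub>R g1 \<theta> + b *\<^sub>R f1 \<theta>) has_derivative (\<lambda>h. a *\<^sub>R g2 \<theta> h + b *\<^sub>R f2 \<theta> h)) (at \<theta>)"
  proof
    have "blinfun_apply (a *\<^sub>R g1 \<theta> + b *\<^sub>R f1 \<theta>) = (\<lambda>h. a * blinfun_apply (g1 \<theta>) h + b * blinfun_apply (f1 \<theta>) h)"
      by (rule ext) (simp add: blinfun.add_left blinfun.scaleR_left)
    then show "((\<lambda>\<theta>. a * g \<theta> + b * f \<theta>) has_derivative blinfun_apply (a *\<^sub>R g1 \<theta> + b *\<^sub>R f1 \<theta>)) (at \<theta>)"
      using a by simp
  qed (rule b)
qed

lemma d2on_inner:
  fixes f u :: "(real^'p) \<Rightarrow> 'h::real_inner"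
  assumes f: "\<And>\<theta>. \<theta> \<in> U \<Longrightarrow> (f has_derivative blinfun_apply (D1 \<theta>)) (at \<theta>) \<and> (D1 has_derivative blinfun_apply (D2 \<theta>)) (at \<theta>)"
    and u: "\<And>\<theta>. \<theta> \<in> U \<Longrightarrow> (u has_derivative blinfun_apply (E1 \<theta>)) (at \<theta>) \<and> (E1 has_derivative blinfun_apply (E2 \<theta>)) (at \<theta>)"
  shows "d2on U (\<lambda>\<theta>. f \<theta> \<bullet> u \<theta>)
     (\<lambda>\<theta>. (blinfun_inner_left (u \<theta>) o\<^sub>L D1 \<theta>) + (blinfun_inner_right (f \<theta>) o\<^sub>L E1 \<theta>))
     (\<lambda>\<theta> h. ((blinfun_inner_left (u \<theta>) o\<^sub>L blinfun_apply (D2 \<theta>) h) + (blinfun_inner_left (blinfun_apply (E1 \<theta>) h) o\<^sub>L D1 \<theta>))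
          + ((blinfun_inner_right (f \<theta>) o\<^sub>L blinfun_apply (E2 \<theta>) h) + (blinfun_inner_right (blinfun_apply (D1 \<theta>) h) o\<^sub>L E1 \<theta>)))"
  unfolding d2on_def
proof
  fix \<theta> assume th: "\<theta> \<in> U"
  note f1 = f[OF th] and u1 = u[OF th]
  have a: "((\<lambda>\<theta>. f \<theta> \<bullet> u \<theta>) has_derivative (\<lambda>h. f \<theta> \<bullet> blinfun_apply (E1 \<theta>) h + blinfun_apply (D1 \<theta>) h \<bullet> u \<theta>)) (at \<theta>)"
    using f1 u1 by (intro derivative_intros) auto
  have bl1: "((\<lambda>\<theta>. blinfun_inner_left (u \<theta>)) has_derivative (\<lambda>h. blinfun_inner_left (blinfun_apply (E1 \<theta>) h))) (at \<theta>)"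
    using bounded_linear.has_derivative[OF bounded_linear_blinfun_inner_left, of u "blinfun_apply (E1 \<theta>)"] u1 by auto
  have bl2: "((\<lambda>\<theta>. blinfun_inner_right (f \<theta>)) has_derivative (\<lambda>h. blinfun_inner_right (blinfun_apply (D1 \<theta>) h))) (at \<theta>)"
    using bounded_linear.has_derivative[OF bounded_linear_blinfun_inner_right, of f "blinfun_apply (D1 \<theta>)"] f1 by auto
  have b1: "((\<lambda>\<theta>. blinfun_inner_left (u \<theta>) o\<^sub>L D1 \<theta>) has_derivative
     (\<lambda>h. (blinfun_inner_left (u \<theta>) o\<^sub>L blinfun_apply (D2 \<theta>) h) + (blinfun_inner_left (blinfun_apply (E1 \<theta>) h) o\<^sub>L D1 \<theta>))) (at \<theta>)"
    by (rule bounded_bilinear.FDERIV[OF bounded_bilinear_blinfun_compose bl1]) (use f1 in auto)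
  have b2: "((\<lambda>\<theta>. blinfun_inner_right (f \<theta>) o\<^sub>L E1 \<theta>) has_derivative
     (\<lambda>h. (blinfun_inner_right (f \<theta>) o\<^sub>L blinfun_apply (E2 \<theta>) h) + (blinfun_inner_right (blinfun_apply (D1 \<theta>) h) o\<^sub>L E1 \<theta>))) (at \<theta>)"
    by (rule bounded_bilinear.FDERIV[OF bounded_bilinear_blinfun_compose bl2]) (use u1 in auto)
  have e: "blinfun_apply ((blinfun_inner_left (u \<theta>) o\<^sub>L D1 \<theta>) + (blinfun_inner_right (f \<theta>) o\<^sub>L E1 \<theta>))
     = (\<lambda>h. f \<theta> \<bullet> blinfun_apply (E1 \<theta>) h + blinfun_apply (D1 \<theta>) h \<bullet> u \<theta>)"
    by (rule ext) (simp add: blinfun.add_left)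
  show "((\<lambda>\<theta>. f \<theta> \<bullet> u \<theta>) has_derivative blinfun_apply ((blinfun_inner_left (u \<theta>) o\<^sub>L D1 \<theta>) + (blinfun_inner_right (f \<theta>) o\<^sub>L E1 \<theta>))) (at \<theta>) \<and>
    ((\<lambda>\<theta>. (blinfun_inner_left (u \<theta>) o\<^sub>L D1 \<theta>) + (blinfun_inner_right (f \<theta>) o\<^sub>L E1 \<theta>)) has_derivative
     (\<lambda>h. ((blinfun_inner_left (u \<theta>) o\<^sub>L blinfun_apply (D2 \<theta>) h) + (blinfun_inner_left (blinfun_apply (E1 \<theta>) h) o\<^sub>L D1 \<theta>))
          + ((blinfun_inner_right (f \<theta>) o\<^sub>L blinfun_apply (E2 \<theta>) h) + (blinfun_inner_right (blinfun_apply (D1 \<theta>) h) o\<^sub>L E1 \<theta>)))) (at \<theta>)"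
    using a e has_derivative_add[OF b1 b2] by simp
qed

lemma unif_compact:
  fixes d :: "nat \<Rightarrow> 'h::real_inner"
  assumes C: "compact C" and B: "\<And>n. norm (d n) \<le> B" and w: "\<And>v. (\<lambda>n. v \<bullet> d n) \<longlonglongrightarrow> 0"
    and e: "\<epsilon> > 0"
  shows "\<forall>\<^sub>F n in sequentially. \<forall>v\<in>C. \<bar>v \<bullet> d n\<bar> < \<epsilon>"
proof -
  have B0: "B \<ge> 0" using B[of 0] norm_ge_zero order_trans by blast
  define \<delta> where "\<delta> = \<epsilon> / (2 * (B + 1))"
  have dpos: "\<delta> > 0" using e B0 by (simp add: \<delta>_def)
  obtain k where k: "finite k" "k \<subseteq> C" "C \<subseteq> (\<Union>x\<in>k. ball x \<delta>)"
    using seq_compact_imp_totally_bounded[OF compact_imp_seq_compact[OF C]] dpos by meson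
  have "\<forall>\<^sub>F n in sequentially. \<forall>c\<in>k. \<bar>c \<bullet> d n\<bar> < \<epsilon>/2"
  proof (rule eventually_ball_finite[OF k(1)], rule ballI)
    fix c assume "c \<in> k"
    have "(\<lambda>n. c \<bullet> d n) \<longlonglongrightarrow> 0" by (rule w)
    then show "\<forall>\<^sub>F n in sequentially. \<bar>c \<bullet> d n\<bar> < \<epsilon>/2"
      using e tendstoD[OF \<open>(\<lambda>n. c \<bullet> d n) \<longlonglongrightarrow> 0\<close>, of "\<epsilon>/2"] by (simp add: dist_real_def)
  qed
  then show ?thesis
  proof eventually_elim
    case (elim n)
    show ?case
    proof
      fix v assume "v \<in> C"
      then obtain c where c: "c \<in> k" "dist c v < \<delta>" using k(3) by auto
      have 1: "\<bar>v \<bullet> d n\<bar> \<le> \<bar>c \<bullet> d n\<bar> + \<bar>(v - c) \<bullet> d n\<bar>"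
        using abs_triangle_ineq[of "c \<bullet> d n" "(v - c) \<bullet> d n"] by (simp add: inner_diff_left)
      have 2: "\<bar>(v - c) \<bullet> d n\<bar> \<le> norm (v - c) * norm (d n)" by (rule Cauchy_Schwarz_ineq2)
      have 3: "norm (v - c) * norm (d n) \<le> \<delta> * B"
        using c(2) B[of n] dpos by (intro mult_mono) (auto simp: dist_norm norm_minus_commute)
      have 4: "\<delta> * B \<le> \<epsilon> / 2"
        using e B0 by (simp add: \<delta>_def field_simps)
      show "\<bar>v \<bullet> d n\<bar> < \<epsilon>" using elim c(1) 1 2 3 4 by fastforce
    qed
  qed
qed

lemma sup_ereal_tendsto:
  assumes K: "K \<noteq> {}" and ev: "\<And>\<epsilon>. \<epsilon> > 0 \<Longrightarrow> \<forall>\<^sub>F n in sequentially. \<forall>\<theta>\<in>K. \<bar>f n \<theta>\<bar> \<le> \<epsilon>"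
  shows "(\<lambda>n. SUP \<theta>\<in>K. ereal \<bar>f n \<theta>\<bar>) \<longlonglongrightarrow> 0"
proof (rule order_tendstoI)
  fix a :: ereal assume "a < 0"
  have "0 \<le> (SUP \<theta>\<in>K. ereal \<bar>f n \<theta>\<bar>)" for n
    using K by (metis SUP_upper2 abs_ge_zero all_not_in_conv zero_ereal_def ereal_less_eq(3))
  then show "\<forall>\<^sub>F n in sequentially. a < (SUP \<theta>\<in>K. ereal \<bar>f n \<theta>\<bar>)"
    using \<open>a < 0\<close> by (intro always_eventually allI) (rule less_le_trans)
next
  fix a :: ereal assume "0 < a"
  then obtain r where r: "0 < ereal r" "ereal r < a" using ereal_dense2 by blast
  then have "r > 0" by simp
  show "\<forall>\<^sub>F n in sequentially. (SUP \<theta>\<in>K. ereal \<bar>f n \<theta>\<bar>) < a"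
    using ev[OF \<open>r > 0\<close>]
  proof eventually_elim
    case (elim n)
    then have "(SUP \<theta>\<in>K. ereal \<bar>f n \<theta>\<bar>) \<le> ereal r" by (auto intro!: SUP_least)
    then show ?case using r(2) by (rule le_less_trans)
  qed
qed

lemma slln_bounded:
  fixes X :: "nat \<Rightarrow> 'a \<Rightarrow> real"
  assumes P: "prob_space M" and ind: "prob_space.indep_vars M (\<lambda>_. borel) X UNIV"
    and dis: "\<And>i. distr M borel (X i) = distr M borel (X 0)"
    and bd: "\<And>i x. X i x \<in> {a..b}"
  shows "AE x in M. (\<lambda>n. (\<Sum>i<n. X i x) / real n) \<longlonglongrightarrow> prob_space.expectation M (X 0)"
proof -
  interpret prob_space M by (rule P)
  define \<mu> where "\<mu> = expectation (X 0)"
  have meas[measurable]: "X i \<in> borel_measurable M" for i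
    using ind unfolding indep_vars_def by auto
  have one: "AE x in M. \<forall>\<^sub>F n in sequentially. \<bar>(\<Sum>i<Suc n. X i x) / real (Suc n) - \<mu>\<bar> < \<epsilon>"
    if e: "\<epsilon> > 0" for \<epsilon>
  proof -
    define A where "A n = {x\<in>space M. \<bar>(\<Sum>i<Suc n. X i x) / real (Suc n) - \<mu>\<bar> \<ge> \<epsilon>}" for n
    define c where "c = 2 * \<epsilon>\<^sup>2 / (b + 1 - a)\<^sup>2"
    have ab: "a \<le> b" using bd[of 0 undefined] by auto
    have cpos: "c > 0" using e ab by (simp add: c_def)
    have bnd: "measure M (A n) \<le> 2 * exp (- c) ^ Suc n" for n
    proof -
      interpret H: Hoeffding_ineq_iid M "{..<Suc n}" X "X 0" a "b + 1" \<mu>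
        apply unfold_locales
        using bd dis indep_vars_subset[OF ind] unfolding \<mu>_def apply (simp_all add: meas)
        apply (rule AE_I2) using bd by (smt (verit) atLeastAtMost_iff)
      have "measure M (A n) \<le> 2 * exp (-2 * real (card {..<Suc n}) * \<epsilon>\<^sup>2 / (b + 1 - a)\<^sup>2)"
        unfolding A_def using H.Hoeffding_ineq_abs_ge'[of \<epsilon>] e ab by (simp add: lessThan_empty_iff)
      also have "-2 * real (card {..<Suc n}) * \<epsilon>\<^sup>2 / (b + 1 - a)\<^sup>2 = real (Suc n) * (- c)"
        using ab by (simp add: c_def divide_simps) (simp add: algebra_simps)
      finally show ?thesis by (simp only: exp_of_nat_mult)
    qed
    have "summable (\<lambda>n. 2 * exp (- c) ^ Suc n)"
      using cpos by (intro summable_mult summable_Suc_iff[THEN iffD2] summable_geometric) auto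
    then have sm: "summable (\<lambda>n. measure M (A n))"
      by (rule summable_comparison_test[rotated]) (use bnd in \<open>auto intro!: exI[of _ 0]\<close>)
    have "AE x in M. \<forall>\<^sub>F n in sequentially. x \<in> space M - A n"
      by (rule borel_cantelli_AE1[OF _ _ sm]) (simp_all add: A_def less_top[symmetric])
    then show ?thesis by (auto simp: A_def not_le elim!: eventually_mono)
  qed
  have "AE x in M. \<forall>k::nat. \<forall>\<^sub>F n in sequentially. \<bar>(\<Sum>i<Suc n. X i x) / real (Suc n) - \<mu>\<bar> < 1 / real (Suc k)"
    unfolding AE_all_countable by (intro allI one) simp
  then show ?thesis
  proof (rule AE_mp[OF _ AE_I2], intro impI)
    fix x assume h: "\<forall>k::nat. \<forall>\<^sub>F n in sequentially. \<bar>(\<Sum>i<Suc n. X i x) / real (Suc n) - \<mu>\<bar> < 1 / real (Suc k)"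
    have "(\<lambda>n. (\<Sum>i<Suc n. X i x) / real (Suc n)) \<longlonglongrightarrow> \<mu>"
    proof (rule tendstoI)
      fix \<epsilon> :: real assume "\<epsilon> > 0"
      then obtain k where k: "1 / real (Suc k) < \<epsilon>" using nat_approx_posE by blast
      show "\<forall>\<^sub>F n in sequentially. dist ((\<Sum>i<Suc n. X i x) / real (Suc n)) \<mu> < \<epsilon>"
        using h[rule_format, of k] by eventually_elim (use k in \<open>auto simp: dist_real_def\<close>)
    qed
    then show "(\<lambda>n. (\<Sum>i<n. X i x) / real n) \<longlonglongrightarrow> expectation (X 0)"
      unfolding \<mu>_def by (rule LIMSEQ_imp_Suc)
  qed
qed

definition Qf :: "((real^'p) \<Rightarrow> 'h::real_inner) \<Rightarrow> ((real^'p) \<Rightarrow> ((real^'p) \<Rightarrow>\<^sub>L 'h))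
   \<Rightarrow> ((real^'p) \<Rightarrow> ((real^'p) \<Rightarrow>\<^sub>L (real^'p) \<Rightarrow>\<^sub>L 'h)) \<Rightarrow> 'p \<Rightarrow> 'p \<Rightarrow> (real^'p) \<Rightarrow> real" where
  "Qf e D1 D2 k j \<theta> = blinfun_apply (blinfun_apply (D2 \<theta>) (axis k 1)) (axis j 1) \<bullet> e \<theta>
     + blinfun_apply (D1 \<theta>) (axis j 1) \<bullet> blinfun_apply (D1 \<theta>) (axis k 1)
     + e \<theta> \<bullet> blinfun_apply (blinfun_apply (D2 \<theta>) (axis k 1)) (axis j 1)
     + blinfun_apply (D1 \<theta>) (axis k 1) \<bullet> blinfun_apply (D1 \<theta>) (axis j 1)"

lemma hessF:
  fixes e :: "'m \<Rightarrow> (real^'p) \<Rightarrow> 'h::real_inner"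
    and D1 :: "'m \<Rightarrow> (real^'p) \<Rightarrow> ((real^'p) \<Rightarrow>\<^sub>L 'h)"
    and D2 :: "'m \<Rightarrow> (real^'p) \<Rightarrow> ((real^'p) \<Rightarrow>\<^sub>L (real^'p) \<Rightarrow>\<^sub>L 'h)"
  assumes U: "open U" and S: "finite S" and C2: "\<And>m. m \<in> S \<Longrightarrow> C2_on U (e m) (D1 m) (D2 m)"
    and th: "\<theta> \<in> U"
  shows "\<exists>H. has_hessian_at (\<lambda>\<theta>. \<Sum>m\<in>S. a m * (e m \<theta> \<bullet> e m \<theta>) + (-2) * (e m \<theta> \<bullet> v m)) H \<theta>"
    and "second_partial (\<lambda>\<theta>. \<Sum>m\<in>S. a m * (e m \<theta> \<bullet> e m \<theta>) + (-2) * (e m \<theta> \<bullet> v m)) k j \<theta>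
       = (\<Sum>m\<in>S. a m * Qf (e m) (D1 m) (D2 m) k j \<theta>
            + (-2) * (blinfun_apply (blinfun_apply (D2 m \<theta>) (axis k 1)) (axis j 1) \<bullet> v m))"
proof -
  define G1 where "G1 m \<theta> = (blinfun_inner_left (e m \<theta>) o\<^sub>L D1 m \<theta>) + (blinfun_inner_right (e m \<theta>) o\<^sub>L D1 m \<theta>)" for m \<theta>
  define G2 where "G2 m \<theta> h = ((blinfun_inner_left (e m \<theta>) o\<^sub>L blinfun_apply (D2 m \<theta>) h) + (blinfun_inner_left (blinfun_apply (D1 m \<theta>) h) o\<^sub>L D1 m \<theta>))
          + ((blinfun_inner_right (e m \<theta>) o\<^sub>L blinfun_apply (D2 m \<theta>) h) + (blinfun_inner_right (blinfun_apply (D1 m \<theta>) h) o\<^sub>L D1 m \<theta>))" for m \<theta> h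
  define H1 where "H1 m \<theta> = (blinfun_inner_left (v m) o\<^sub>L D1 m \<theta>) + (blinfun_inner_right (e m \<theta>) o\<^sub>L (0::(real^'p) \<Rightarrow>\<^sub>L 'h))" for m \<theta>
  define H2 where "H2 m \<theta> h = ((blinfun_inner_left (v m) o\<^sub>L blinfun_apply (D2 m \<theta>) h) + (blinfun_inner_left (blinfun_apply (0::(real^'p) \<Rightarrow>\<^sub>L 'h) h) o\<^sub>L D1 m \<theta>))
          + ((blinfun_inner_right (e m \<theta>) o\<^sub>L blinfun_apply (0::(real^'p) \<Rightarrow>\<^sub>L (real^'p) \<Rightarrow>\<^sub>L 'h) h) + (blinfun_inner_right (blinfun_apply (D1 m \<theta>) h) o\<^sub>L (0::(real^'p) \<Rightarrow>\<^sub>L 'h)))" for m \<theta> h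
  have dm: "d2on U (\<lambda>\<theta>. a m * (e m \<theta> \<bullet> e m \<theta>) + (-2) * (e m \<theta> \<bullet> v m))
      (\<lambda>\<theta>. a m *\<^sub>R G1 m \<theta> + (-2) *\<^sub>R H1 m \<theta>) (\<lambda>\<theta> h. a m *\<^sub>R G2 m \<theta> h + (-2) *\<^sub>R H2 m \<theta> h)" if m: "m \<in> S" for m
  proof (rule d2on_lin)
    have c: "\<And>\<theta>. \<theta> \<in> U \<Longrightarrow> (e m has_derivative blinfun_apply (D1 m \<theta>)) (at \<theta>) \<and> (D1 m has_derivative blinfun_apply (D2 m \<theta>)) (at \<theta>)"
      using C2[OF m] unfolding C2_on_def by blast
    show "d2on U (\<lambda>\<theta>. e m \<theta> \<bullet> e m \<theta>) (G1 m) (G2 m)"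
      unfolding G1_def[abs_def] G2_def[abs_def] by (rule d2on_inner[OF c c])
    have c0: "((\<lambda>\<theta>. v m) has_derivative blinfun_apply (0::(real^'p) \<Rightarrow>\<^sub>L 'h)) (at \<theta>) \<and>
       ((\<lambda>\<theta>. 0::(real^'p) \<Rightarrow>\<^sub>L 'h) has_derivative blinfun_apply (0::(real^'p) \<Rightarrow>\<^sub>L (real^'p) \<Rightarrow>\<^sub>L 'h)) (at \<theta>)" for \<theta>
      by (simp add: zero_blinfun.rep_eq)
    show "d2on U (\<lambda>\<theta>. e m \<theta> \<bullet> v m) (H1 m) (H2 m)"
      unfolding H1_def[abs_def] H2_def[abs_def]
      using d2on_inner[OF c c0] by simp
  qed
  have d: "d2on U (\<lambda>\<theta>. \<Sum>m\<in>S. a m * (e m \<theta> \<bullet> e m \<theta>) + (-2) * (e m \<theta> \<bullet> v m))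
     (\<lambda>\<theta>. \<Sum>m\<in>S. a m *\<^sub>R G1 m \<theta> + (-2) *\<^sub>R H1 m \<theta>) (\<lambda>\<theta> h. \<Sum>m\<in>S. a m *\<^sub>R G2 m \<theta> h + (-2) *\<^sub>R H2 m \<theta> h)"
    by (rule d2on_sum[OF S dm])
  show "\<exists>H. has_hessian_at (\<lambda>\<theta>. \<Sum>m\<in>S. a m * (e m \<theta> \<bullet> e m \<theta>) + (-2) * (e m \<theta> \<bullet> v m)) H \<theta>"
    using d2on_hess(1)[OF U d th] by blast
  show "second_partial (\<lambda>\<theta>. \<Sum>m\<in>S. a m * (e m \<theta> \<bullet> e m \<theta>) + (-2) * (e m \<theta> \<bullet> v m)) k j \<theta>
       = (\<Sum>m\<in>S. a m * Qf (e m) (D1 m) (D2 m) k j \<theta>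
            + (-2) * (blinfun_apply (blinfun_apply (D2 m \<theta>) (axis k 1)) (axis j 1) \<bullet> v m))"
    unfolding d2on_hess(3)[OF U d th]
    by (simp add: blinfun.sum_left blinfun.add_left blinfun.diff_left blinfun.scaleR_left G2_def H2_def Qf_def zero_blinfun.rep_eq add.assoc)
qed

lemma C2_cont:
  assumes U: "open U" and C: "C2_on U f D1 D2" and KU: "K \<subseteq> U"
  shows "continuous_on K (Qf f D1 D2 k j)"
    and "continuous_on K (\<lambda>\<theta>. blinfun_apply (blinfun_apply (D2 \<theta>) (axis k 1)) (axis j 1))"
proof -
  have cf: "continuous_on K f"
    by (rule continuous_at_imp_continuous_on)
       (use C KU in \<open>auto simp: C2_on_def dest!: has_derivative_continuous\<close>)
  have cD1: "continuous_on K D1"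
    by (rule continuous_at_imp_continuous_on)
       (use C KU in \<open>auto simp: C2_on_def dest!: has_derivative_continuous\<close>)
  have cD2: "continuous_on K D2"
    using C KU continuous_on_subset unfolding C2_on_def by blast
  have a1: "continuous_on K (\<lambda>\<theta>. blinfun_apply (D1 \<theta>) (axis i 1))" for i
    by (rule blinfun.continuous_on[OF cD1 continuous_on_const])
  have a2: "continuous_on K (\<lambda>\<theta>. blinfun_apply (D2 \<theta>) (axis k 1))"
    by (rule blinfun.continuous_on[OF cD2 continuous_on_const])
  show a3: "continuous_on K (\<lambda>\<theta>. blinfun_apply (blinfun_apply (D2 \<theta>) (axis k 1)) (axis j 1))"
    by (rule blinfun.continuous_on[OF a2 continuous_on_const])
  show "continuous_on K (Qf f D1 D2 k j)"
    unfolding Qf_def[abs_def] by (intro continuous_intros a1 a3 cf)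
qed

lemma weak_dense:
  fixes x :: "nat \<Rightarrow> 'h::real_inner"
  assumes D: "\<And>w r. r > 0 \<Longrightarrow> \<exists>d\<in>D. dist d w < r" and B: "\<And>n. norm (x n) \<le> B"
    and c: "\<And>d. d \<in> D \<Longrightarrow> (\<lambda>n. d \<bullet> x n) \<longlonglongrightarrow> 0"
  shows "(\<lambda>n. w \<bullet> x n) \<longlonglongrightarrow> 0"
proof (rule tendstoI)
  fix \<epsilon> :: real assume e: "\<epsilon> > 0"
  have B0: "B \<ge> 0" using B[of 0] norm_ge_zero order_trans by blast
  obtain d where d: "d \<in> D" "dist d w < \<epsilon> / (2 * (B + 1))"
    using D[of "\<epsilon> / (2 * (B + 1))"] e B0 by auto
  have "\<forall>\<^sub>F n in sequentially. \<bar>d \<bullet> x n\<bar> < \<epsilon> / 2"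
    using tendstoD[OF c[OF d(1)], of "\<epsilon>/2"] e by (simp add: dist_real_def)
  then show "\<forall>\<^sub>F n in sequentially. dist (w \<bullet> x n) 0 < \<epsilon>"
  proof eventually_elim
    case (elim n)
    have 1: "\<bar>w \<bullet> x n\<bar> \<le> \<bar>d \<bullet> x n\<bar> + \<bar>(w - d) \<bullet> x n\<bar>"
      using abs_triangle_ineq[of "d \<bullet> x n" "(w - d) \<bullet> x n"] by (simp add: inner_diff_left)
    have 2: "\<bar>(w - d) \<bullet> x n\<bar> \<le> norm (w - d) * norm (x n)" by (rule Cauchy_Schwarz_ineq2)
    have 3: "norm (w - d) * norm (x n) \<le> (\<epsilon> / (2 * (B + 1))) * B"
      using d(2) B[of n] e B0 by (intro mult_mono) (auto simp: dist_norm norm_minus_commute)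
    have 4: "(\<epsilon> / (2 * (B + 1))) * B \<le> \<epsilon> / 2"
      using e B0 by (simp add: field_simps)
    have "\<bar>w \<bullet> x n\<bar> < \<epsilon>" using elim 1 2 3 4 by linarith
    then show ?case by (simp add: dist_real_def)
  qed
qed

lemma sum_unif:
  fixes \<alpha> :: "'m \<Rightarrow> nat \<Rightarrow> real" and \<beta> :: "'m \<Rightarrow> nat \<Rightarrow> 'x \<Rightarrow> real"
  assumes S: "finite S" and Q: "\<And>m \<theta>. m \<in> S \<Longrightarrow> \<theta> \<in> K \<Longrightarrow> \<bar>Q m \<theta>\<bar> \<le> BQ m"
    and al: "\<And>m. m \<in> S \<Longrightarrow> \<alpha> m \<longlonglongrightarrow> 0"
    and be: "\<And>m \<epsilon>. m \<in> S \<Longrightarrow> \<epsilon> > 0 \<Longrightarrow> \<forall>\<^sub>F n in sequentially. \<forall>\<theta>\<in>K. \<bar>\<beta> m n \<theta>\<bar> < \<epsilon>"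
    and e: "\<epsilon> > 0"
  shows "\<forall>\<^sub>F n in sequentially. \<forall>\<theta>\<in>K. \<bar>\<Sum>m\<in>S. \<alpha> m n * Q m \<theta> + (-2) * \<beta> m n \<theta>\<bar> \<le> \<epsilon>"
proof -
  define c where "c = real (card S) + 1"
  have c: "c > 0" by (simp add: c_def)
  have each: "\<forall>\<^sub>F n in sequentially. \<forall>\<theta>\<in>K. \<bar>\<alpha> m n * Q m \<theta> + (-2) * \<beta> m n \<theta>\<bar> \<le> \<epsilon> / c"
    if m: "m \<in> S" for m
  proof -
    define b where "b = \<bar>BQ m\<bar> + 1"
    have b: "b > 0" by (simp add: b_def)
    have "\<forall>\<^sub>F n in sequentially. \<bar>\<alpha> m n\<bar> < \<epsilon> / (2 * c * b)"
      using tendstoD[OF al[OF m], of "\<epsilon> / (2 * c * b)"] e c b by (simp add: dist_real_def)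
    moreover have "\<forall>\<^sub>F n in sequentially. \<forall>\<theta>\<in>K. \<bar>\<beta> m n \<theta>\<bar> < \<epsilon> / (4 * c)"
      using be[OF m, of "\<epsilon> / (4 * c)"] e c by simp
    ultimately show ?thesis
    proof eventually_elim
      case (elim n)
      show ?case
      proof
        fix \<theta> assume th: "\<theta> \<in> K"
        have q: "\<bar>Q m \<theta>\<bar> \<le> b" using Q[OF m th] by (simp add: b_def)
        have "\<bar>\<alpha> m n * Q m \<theta>\<bar> \<le> (\<epsilon> / (2 * c * b)) * b"
          unfolding abs_mult using elim(1) q by (intro mult_mono) auto
        also have "\<dots> = \<epsilon> / (2 * c)" using b by simp
        finally have 1: "\<bar>\<alpha> m n * Q m \<theta>\<bar> \<le> \<epsilon> / (2 * c)" .
        have 2: "\<bar>\<beta> m n \<theta>\<bar> < \<epsilon> / (4 * c)" using elim(2) th by blast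
        have "\<epsilon> / (2 * c) + 2 * (\<epsilon> / (4 * c)) = \<epsilon> / c" by (simp add: field_simps)
        then show "\<bar>\<alpha> m n * Q m \<theta> + (-2) * \<beta> m n \<theta>\<bar> \<le> \<epsilon> / c" using 1 2 by linarith
      qed
    qed
  qed
  have "\<forall>\<^sub>F n in sequentially. \<forall>m\<in>S. \<forall>\<theta>\<in>K. \<bar>\<alpha> m n * Q m \<theta> + (-2) * \<beta> m n \<theta>\<bar> \<le> \<epsilon> / c"
    by (rule eventually_ball_finite[OF S]) (intro ballI each)
  then show ?thesis
  proof eventually_elim
    case (elim n)
    show ?case
    proof
      fix \<theta> assume th: "\<theta> \<in> K"
      have "\<bar>\<Sum>m\<in>S. \<alpha> m n * Q m \<theta> + (-2) * \<beta> m n \<theta>\<bar> \<le> (\<Sum>m\<in>S. \<bar>\<alpha> m n * Q m \<theta> + (-2) * \<beta> m n \<theta>\<bar>)"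
        by (rule sum_abs)
      also have "\<dots> \<le> (\<Sum>m\<in>S. \<epsilon> / c)" using elim th by (intro sum_mono) auto
      also have "\<dots> = real (card S) * (\<epsilon> / c)" by simp
      also have "\<dots> \<le> \<epsilon>" using e c by (simp add: c_def field_simps)
      finally show "\<bar>\<Sum>m\<in>S. \<alpha> m n * Q m \<theta> + (-2) * \<beta> m n \<theta>\<bar> \<le> \<epsilon>" .
    qed
  qed
qed

theorem lemma2:
  fixes Pr :: "'w measure"
    and Z :: "nat \<Rightarrow> 'w \<Rightarrow> (real^'d) \<times> ('d \<Rightarrow> bool)"
    and phi :: "('d \<Rightarrow> bool) \<Rightarrow> real^'d \<Rightarrow> 'h::{real_inner,banach,second_countable_topology}"
    and P :: "(real^'p) \<Rightarrow> (real^'d) measure"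
    and Theta Oset K :: "(real^'p) set"
    and theta0 :: "(real^'p)"
  assumes prob: "prob_space Pr"
    and indep: "prob_space.indep_vars Pr (\<lambda>_. obs_space) Z UNIV"
    and ident: "\<And>i. distr Pr obs_space (Z i) = distr Pr obs_space (Z 0)"
    and phi_meas: "\<And>m. phi m \<in> borel_measurable borel"
    and phi_bdd: "\<And>m x. norm (phi m x) \<le> 1"
    and phi_obs: "\<And>m x y. (\<forall>j. \<not> m j \<longrightarrow> x $ j = y $ j) \<Longrightarrow> phi m x = phi m y"
    and model_prob: "\<And>\<theta>. \<theta> \<in> Theta \<Longrightarrow> prob_space (P \<theta>)"
    and model_sets: "\<And>\<theta>. \<theta> \<in> Theta \<Longrightarrow> sets (P \<theta>) = sets borel"
    and theta0_in: "theta0 \<in> Theta"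
    and theta0_min: "\<And>\<theta>. \<theta> \<in> Theta \<Longrightarrow>
          mmd_obj phi P (distr Pr obs_space (Z 0)) theta0 \<le> mmd_obj phi P (distr Pr obs_space (Z 0)) \<theta>"
    and O: "open Oset" "Oset \<subseteq> Theta" "theta0 \<in> Oset"
    and K: "compact K" "K \<subseteq> Oset" "theta0 \<in> interior K"
    and smooth: "\<And>m. measure (distr Pr obs_space (Z 0)) {z \<in> space obs_space. snd z = m} > 0 \<Longrightarrow>
          \<exists>D1 D2. C2_on Oset (\<lambda>\<theta>. emb phi (P \<theta>) m) D1 D2
            \<and> (\<forall>j k. bounded ((\<lambda>\<theta>. norm (blinfun_apply (blinfun_apply (D2 \<theta>) (axis k 1)) (axis j 1))) ` K))"
  shows "(\<forall>\<theta>\<in>K. \<exists>H. has_hessian_at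
              (\<lambda>\<theta>. \<integral>z. ell phi P z \<theta> \<partial>(distr Pr obs_space (Z 0))) H \<theta>)
       \<and> (AE \<omega> in Pr.
           (\<forall>n\<ge>1. \<forall>\<theta>\<in>K. \<exists>H. has_hessian_at
              (\<lambda>\<theta>. (1 / real n) * (\<Sum>i<n. ell phi P (Z i \<omega>) \<theta>)) H \<theta>)
         \<and> (\<forall>j k. (\<lambda>n. SUP \<theta>\<in>K. ereal \<bar>second_partial (\<lambda>\<theta>. (1 / real n) * (\<Sum>i<n. ell phi P (Z i \<omega>) \<theta>)) k j \<theta>
                         - second_partial (\<lambda>\<theta>. \<integral>z. ell phi P z \<theta> \<partial>(distr Pr obs_space (Z 0))) k j \<theta>\<bar>)
                 \<longlonglongrightarrow> 0))"
proof -
  interpret Pr: prob_space Pr by (rule prob)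
  define \<nu> where "\<nu> = distr Pr obs_space (Z 0)"
  have Zm[measurable]: "Z i \<in> measurable Pr obs_space" for i
    using indep unfolding Pr.indep_vars_def by auto
  have spO: "space obs_space = UNIV" by (simp add: obs_space_def space_pair_measure)
  interpret nu: prob_space \<nu> unfolding \<nu>_def by (rule Pr.prob_space_distr) simp
  have sets_nu[measurable_cong]: "sets \<nu> = sets obs_space" by (simp add: \<nu>_def)
  have space_nu: "space \<nu> = UNIV" by (simp add: \<nu>_def spO)
  have snd_m[measurable]: "snd \<in> measurable obs_space (count_space UNIV)"
    unfolding obs_space_def by simp
  have fst_m[measurable]: "fst \<in> measurable obs_space borel"
    unfolding obs_space_def by simp
  have setA: "{z \<in> space obs_space. snd z \<in> A} \<in> sets obs_space" for A
  proof -
    have "snd -` A \<inter> space obs_space \<in> sets obs_space" by (rule measurable_sets[OF snd_m]) simp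
    moreover have "snd -` A \<inter> space obs_space = {z \<in> space obs_space. snd z \<in> A}" by auto
    ultimately show ?thesis by simp
  qed
  have setm: "{z \<in> space obs_space. snd z = m} \<in> sets obs_space" for m
    using setA[of "{m}"] by simp

  define pm where "pm m = measure \<nu> {z \<in> space obs_space. snd z = m}" for m
  define S where "S = {m. m \<noteq> all_missing \<and> pm m > 0}"
  define S' where "S' = {m::'d\<Rightarrow>bool. m \<noteq> all_missing}"
  have finS: "finite S" "finite S'" by simp_all
  have SS': "S \<subseteq> S'" by (auto simp: S_def S'_def)
  have pm0: "pm m \<ge> 0" for m by (simp add: pm_def)
  have pmS: "m \<in> S' - S \<Longrightarrow> pm m = 0" for m using pm0[of m] by (auto simp: S_def S'_def)
  obtain D1 D2 where DD: "\<And>m. m \<in> S \<Longrightarrow> C2_on Oset (\<lambda>\<theta>. emb phi (P \<theta>) m) (D1 m) (D2 m)"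
  proof -
    have "\<forall>m\<in>S. \<exists>D. C2_on Oset (\<lambda>\<theta>. emb phi (P \<theta>) m) (fst D) (snd D)"
    proof
      fix m assume "m \<in> S"
      then have "measure (distr Pr obs_space (Z 0)) {z \<in> space obs_space. snd z = m} > 0"
        by (simp add: S_def pm_def \<nu>_def)
      from smooth[OF this] obtain A B where "C2_on Oset (\<lambda>\<theta>. emb phi (P \<theta>) m) A B" by blast
      then show "\<exists>D. C2_on Oset (\<lambda>\<theta>. emb phi (P \<theta>) m) (fst D) (snd D)" by (intro exI[of _ "(A, B)"]) simp
    qed
    then obtain D where "\<forall>m\<in>S. C2_on Oset (\<lambda>\<theta>. emb phi (P \<theta>) m) (fst (D m)) (snd (D m))"
      by (rule bchoice[elim_format]) blast
    then show thesis using that[of "\<lambda>m. fst (D m)" "\<lambda>m. snd (D m)"] by blast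
  qed
  define e where "e m \<theta> = emb phi (P \<theta>) m" for m \<theta>
  have DDe: "\<And>m. m \<in> S \<Longrightarrow> C2_on Oset (e m) (D1 m) (D2 m)"
    using DD unfolding e_def[abs_def] .
  define F where "F a v \<theta> = (\<Sum>m\<in>S. a m * (e m \<theta> \<bullet> e m \<theta>) + (-2) * (e m \<theta> \<bullet> v m))" for a v \<theta>
  define ind where "ind m z = (indicator {z \<in> space obs_space. snd z = m} z :: real)" for m and z :: "(real^'d) \<times> ('d \<Rightarrow> bool)"
  have ind_eq: "ind m z = (if snd z = m then 1 else 0)" for m z by (simp add: ind_def spO)
  define g where "g m z = ind m z *\<^sub>R phi m (fst z)" for m z
  have ind_m[measurable]: "ind m \<in> borel_measurable obs_space" for m
    unfolding ind_def[abs_def] using setm by simp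
  have phi_m[measurable]: "phi m \<in> borel_measurable borel" for m by (rule phi_meas)
  have g_m[measurable]: "g m \<in> borel_measurable obs_space" for m
    unfolding g_def[abs_def] by measurable
  have g_bd: "norm (g m z) \<le> ind m z" for m z
    using phi_bdd[of m "fst z"] by (auto simp: g_def ind_eq)
  have ind_bd: "ind m z \<in> {0..1}" for m z by (simp add: ind_eq)
  have g_bd1: "norm (g m z) \<le> 1" for m z using g_bd[of m z] ind_bd[of m z] by simp
  have int_ind: "integrable \<nu> (ind m)" for m
    by (rule nu.integrable_const_bound[where B=1]) (use ind_bd in \<open>auto simp: sets_nu\<close>)
  have int_g: "integrable \<nu> (g m)" for m
  proof (rule nu.integrable_const_bound[where B=1])
    have "norm (g m z) \<le> 1" for z using g_bd[of m z] ind_bd[of m z] by simp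
    then show "AE x in \<nu>. norm (g m x) \<le> 1" by simp
  qed (use g_m sets_nu in simp)
  have int_ind_eq: "(\<integral>z. ind m z \<partial>\<nu>) = pm m" for m
  proof -
    have "(\<integral>z. ind m z \<partial>\<nu>) = integral\<^sup>L \<nu> (indicator {z \<in> space obs_space. snd z = m})"
      unfolding ind_def by simp
    also have "\<dots> = pm m" by (simp add: pm_def space_nu spO)
    finally show ?thesis .
  qed
  define \<mu> where "\<mu> m = (\<integral>z. g m z \<partial>\<nu>)" for m
  have mu_bd: "norm (\<mu> m) \<le> pm m" for m
  proof -
    have "norm (\<mu> m) \<le> (\<integral>z. norm (g m z) \<partial>\<nu>)" unfolding \<mu>_def by (rule integral_norm_bound)
    also have "\<dots> \<le> (\<integral>z. ind m z \<partial>\<nu>)" by (rule integral_mono) (use int_g int_ind g_bd in auto)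
    finally show ?thesis by (simp add: int_ind_eq)
  qed
  have pm1: "pm m \<le> 1" for m by (simp add: pm_def)

  have ell_dec: "ell phi P z \<theta> = (\<Sum>m\<in>S'. ind m z * (e m \<theta> \<bullet> e m \<theta>) + (-2) * (e m \<theta> \<bullet> g m z))" for z \<theta>
  proof (cases "snd z = all_missing")
    case True
    then have "ind m z = 0" if "m \<in> S'" for m using that by (auto simp: ind_eq S'_def)
    then show ?thesis using True by (simp add: ell_def g_def)
  next
    case False
    have "(\<Sum>m\<in>S'. ind m z * (e m \<theta> \<bullet> e m \<theta>) + (-2) * (e m \<theta> \<bullet> g m z))
        = (\<Sum>m\<in>S'. if m = snd z then (e (snd z) \<theta> \<bullet> e (snd z) \<theta>) + (-2) * (e (snd z) \<theta> \<bullet> phi (snd z) (fst z)) else 0)"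
      by (rule sum.cong) (auto simp: ind_eq g_def)
    also have "\<dots> = (e (snd z) \<theta> \<bullet> e (snd z) \<theta>) + (-2) * (e (snd z) \<theta> \<bullet> phi (snd z) (fst z))"
      using False by (simp add: S'_def)
    finally show ?thesis using False by (simp add: ell_def e_def)
  qed
  have red: "(\<Sum>m\<in>S'. a m * (e m \<theta> \<bullet> e m \<theta>) + (-2) * (e m \<theta> \<bullet> v m)) = F a v \<theta>"
    if "\<And>m. m \<in> S' - S \<Longrightarrow> a m = 0 \<and> v m = 0" for a v \<theta>
    unfolding F_def by (rule sum.mono_neutral_right[OF finS(2) SS']) (use that in auto)
  have pop: "(\<lambda>\<theta>. \<integral>z. ell phi P z \<theta> \<partial>\<nu>) = F pm \<mu>"
  proof
    fix \<theta>
    have "(\<integral>z. ell phi P z \<theta> \<partial>\<nu>) = (\<integral>z. (\<Sum>m\<in>S'. ind m z * (e m \<theta> \<bullet> e m \<theta>) + (-2) * (e m \<theta> \<bullet> g m z)) \<partial>\<nu>)"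
      by (simp add: ell_dec)
    also have "\<dots> = (\<Sum>m\<in>S'. (\<integral>z. ind m z * (e m \<theta> \<bullet> e m \<theta>) + (-2) * (e m \<theta> \<bullet> g m z) \<partial>\<nu>))"
      by (rule Bochner_Integration.integral_sum)
         (intro Bochner_Integration.integrable_add integrable_mult_left integrable_mult_right integrable_inner_right int_ind int_g)
    also have "\<dots> = (\<Sum>m\<in>S'. pm m * (e m \<theta> \<bullet> e m \<theta>) + (-2) * (e m \<theta> \<bullet> \<mu> m))"
    proof (rule sum.cong[OF refl])
      fix m
      have "(\<integral>z. ind m z * (e m \<theta> \<bullet> e m \<theta>) + (-2) * (e m \<theta> \<bullet> g m z) \<partial>\<nu>)
         = (\<integral>z. ind m z * (e m \<theta> \<bullet> e m \<theta>) \<partial>\<nu>) + (\<integral>z. (-2) * (e m \<theta> \<bullet> g m z) \<partial>\<nu>)"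
        by (rule Bochner_Integration.integral_add)
           (intro integrable_mult_left integrable_mult_right integrable_inner_right int_ind int_g)+
      also have "\<dots> = pm m * (e m \<theta> \<bullet> e m \<theta>) + (-2) * (e m \<theta> \<bullet> \<mu> m)"
        using int_g[of m] by (simp add: int_ind_eq \<mu>_def)
      finally show "(\<integral>z. ind m z * (e m \<theta> \<bullet> e m \<theta>) + (-2) * (e m \<theta> \<bullet> g m z) \<partial>\<nu>)
         = pm m * (e m \<theta> \<bullet> e m \<theta>) + (-2) * (e m \<theta> \<bullet> \<mu> m)" .
    qed
    also have "\<dots> = F pm \<mu> \<theta>"
    proof (rule red)
      fix m assume "m \<in> S' - S"
      then show "pm m = 0 \<and> \<mu> m = 0" using pmS mu_bd[of m] by auto
    qed
    finally show "(\<integral>z. ell phi P z \<theta> \<partial>\<nu>) = F pm \<mu> \<theta>" .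
  qed
  have KO: "K \<subseteq> Oset" using K(2) .
  have Kne: "K \<noteq> {}" using K(3) interior_subset by blast
  have hess_ex: "\<exists>H. has_hessian_at (F a v) H \<theta>" if "\<theta> \<in> K" for a v \<theta>
    unfolding F_def[abs_def] by (rule hessF(1)[OF O(1) finS(1) DDe]) (use that KO in auto)
  have sp: "second_partial (F a v) k j \<theta> = (\<Sum>m\<in>S. a m * Qf (e m) (D1 m) (D2 m) k j \<theta>
            + (-2) * (blinfun_apply (blinfun_apply (D2 m \<theta>) (axis k 1)) (axis j 1) \<bullet> v m))"
    if "\<theta> \<in> K" for a v \<theta> k j
    unfolding F_def[abs_def] by (rule hessF(2)[OF O(1) finS(1) DDe]) (use that KO in auto)

  have slln: "AE \<omega> in Pr. (\<lambda>n. (\<Sum>i<n. f (Z i \<omega>)) / real n) \<longlonglongrightarrow> (\<integral>z. f z \<partial>\<nu>)"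
    if fm: "f \<in> borel_measurable obs_space" and fb: "\<And>z. f z \<in> {a..b}" for f :: "_ \<Rightarrow> real" and a b
  proof -
    have "AE \<omega> in Pr. (\<lambda>n. (\<Sum>i<n. f (Z i \<omega>)) / real n) \<longlonglongrightarrow> Pr.expectation (\<lambda>\<omega>. f (Z 0 \<omega>))"
    proof (rule slln_bounded[OF prob])
      show "Pr.indep_vars (\<lambda>_. borel) (\<lambda>i \<omega>. f (Z i \<omega>)) UNIV"
        by (rule Pr.indep_vars_compose2[OF indep]) (use fm in simp)
      show "distr Pr borel (\<lambda>\<omega>. f (Z i \<omega>)) = distr Pr borel (\<lambda>\<omega>. f (Z 0 \<omega>))" for i
      proof -
        have "distr Pr borel (\<lambda>\<omega>. f (Z i \<omega>)) = distr (distr Pr obs_space (Z i)) borel f"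
          by (rule sym[OF distr_distr[OF fm Zm[of i], unfolded comp_def]])
        also have "\<dots> = distr (distr Pr obs_space (Z 0)) borel f" using ident[of i] by simp
        also have "\<dots> = distr Pr borel (\<lambda>\<omega>. f (Z 0 \<omega>))"
          by (rule distr_distr[OF fm Zm[of 0], unfolded comp_def])
        finally show ?thesis .
      qed
      show "f (Z i \<omega>) \<in> {a..b}" for i \<omega> by (rule fb)
    qed
    moreover have "Pr.expectation (\<lambda>\<omega>. f (Z 0 \<omega>)) = (\<integral>z. f z \<partial>\<nu>)"
      unfolding \<nu>_def using fm by (subst integral_distr) auto
    ultimately show ?thesis by simp
  qed

  obtain Dn :: "'h set" where Dn: "countable Dn" "\<And>X. open X \<Longrightarrow> X \<noteq> {} \<Longrightarrow> \<exists>d\<in>Dn. d \<in> X"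
    using countable_dense_exists by blast
  have Dn_dense: "\<exists>d\<in>Dn. dist d w < r" if "r > 0" for w r
  proof -
    have "\<exists>d\<in>Dn. d \<in> ball w r" by (rule Dn(2)) (use that in auto)
    then show ?thesis by (auto simp: dist_commute)
  qed

  have AE_pat: "AE \<omega> in Pr. \<forall>i. snd (Z i \<omega>) \<in> S \<or> snd (Z i \<omega>) = all_missing"
  proof -
    have nu_pat: "AE z in \<nu>. \<forall>m\<in>S' - S. snd z \<noteq> m"
    proof (rule AE_finite_allI)
      show "finite (S' - S)" by simp
      fix m assume m: "m \<in> S' - S"
      show "AE z in \<nu>. snd z \<noteq> m"
      proof (rule AE_I')
        show "{z \<in> space obs_space. snd z = m} \<in> null_sets \<nu>"
          using pmS[OF m] setm[of m] by (simp add: pm_def null_sets_def sets_nu nu.emeasure_eq_measure)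
        show "{z \<in> space \<nu>. \<not> snd z \<noteq> m} \<subseteq> {z \<in> space obs_space. snd z = m}" by (auto simp: spO)
      qed
    qed
    have "AE z in \<nu>. snd z \<in> S \<or> snd z = all_missing"
      using nu_pat by eventually_elim (auto simp: S'_def)
    then have "AE \<omega> in Pr. snd (Z i \<omega>) \<in> S \<or> snd (Z i \<omega>) = all_missing" for i
    proof -
      assume a: "AE z in \<nu>. snd z \<in> S \<or> snd z = all_missing"
      have "AE z in distr Pr obs_space (Z i). snd z \<in> S \<or> snd z = all_missing"
        unfolding ident[of i] using a unfolding \<nu>_def .
      moreover have "{z \<in> space obs_space. snd z \<in> S \<or> snd z = all_missing} \<in> sets obs_space"
        using setA[of "S \<union> {all_missing}"] by simp
      ultimately show ?thesis by (subst (asm) AE_distr_iff) auto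
    qed
    then show ?thesis by (simp add: AE_all_countable)
  qed
  have AE_ind: "AE \<omega> in Pr. \<forall>m\<in>S. (\<lambda>n. (\<Sum>i<n. ind m (Z i \<omega>)) / real n) \<longlonglongrightarrow> pm m"
  proof (rule AE_finite_allI[OF finS(1)])
    fix m
    show "AE \<omega> in Pr. (\<lambda>n. (\<Sum>i<n. ind m (Z i \<omega>)) / real n) \<longlonglongrightarrow> pm m"
      using slln[of "ind m" 0 1] ind_bd by (simp add: int_ind_eq)
  qed
  have AE_g: "AE \<omega> in Pr. \<forall>m\<in>S. \<forall>d\<in>Dn. (\<lambda>n. (\<Sum>i<n. d \<bullet> g m (Z i \<omega>)) / real n) \<longlonglongrightarrow> d \<bullet> \<mu> m"
  proof (rule AE_finite_allI[OF finS(1)])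
    fix m
    show "AE \<omega> in Pr. \<forall>d\<in>Dn. (\<lambda>n. (\<Sum>i<n. d \<bullet> g m (Z i \<omega>)) / real n) \<longlonglongrightarrow> d \<bullet> \<mu> m"
    proof (rule AE_ball_countable'[OF _ Dn(1)])
      fix d
      have b: "d \<bullet> g m z \<in> {- norm d..norm d}" for z
      proof -
        have "\<bar>d \<bullet> g m z\<bar> \<le> norm d * norm (g m z)" by (rule Cauchy_Schwarz_ineq2)
        also have "\<dots> \<le> norm d * 1" using g_bd[of m z] ind_bd[of m z]
          by (intro mult_left_mono) auto
        finally show ?thesis by auto
      qed
      have "(\<integral>z. d \<bullet> g m z \<partial>\<nu>) = d \<bullet> \<mu> m" using int_g[of m] by (simp add: \<mu>_def)
      then show "AE \<omega> in Pr. (\<lambda>n. (\<Sum>i<n. d \<bullet> g m (Z i \<omega>)) / real n) \<longlonglongrightarrow> d \<bullet> \<mu> m"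
        using slln[of "\<lambda>z. d \<bullet> g m z" "- norm d" "norm d"] b by simp
    qed
  qed
  show ?thesis
  proof
    show "\<forall>\<theta>\<in>K. \<exists>H. has_hessian_at (\<lambda>\<theta>. \<integral>z. ell phi P z \<theta> \<partial>distr Pr obs_space (Z 0)) H \<theta>"
      using hess_ex pop unfolding \<nu>_def by simp
    have "AE \<omega> in Pr. (\<forall>i. snd (Z i \<omega>) \<in> S \<or> snd (Z i \<omega>) = all_missing)
       \<and> (\<forall>m\<in>S. (\<lambda>n. (\<Sum>i<n. ind m (Z i \<omega>)) / real n) \<longlonglongrightarrow> pm m)
       \<and> (\<forall>m\<in>S. \<forall>d\<in>Dn. (\<lambda>n. (\<Sum>i<n. d \<bullet> g m (Z i \<omega>)) / real n) \<longlonglongrightarrow> d \<bullet> \<mu> m)"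
      using AE_pat AE_ind AE_g by eventually_elim (intro conjI)
    then show "AE \<omega> in Pr. (\<forall>n\<ge>1. \<forall>\<theta>\<in>K. \<exists>H. has_hessian_at
              (\<lambda>\<theta>. (1 / real n) * (\<Sum>i<n. ell phi P (Z i \<omega>) \<theta>)) H \<theta>)
         \<and> (\<forall>j k. (\<lambda>n. SUP \<theta>\<in>K. ereal \<bar>second_partial (\<lambda>\<theta>. (1 / real n) * (\<Sum>i<n. ell phi P (Z i \<omega>) \<theta>)) k j \<theta>
                         - second_partial (\<lambda>\<theta>. \<integral>z. ell phi P z \<theta> \<partial>(distr Pr obs_space (Z 0))) k j \<theta>\<bar>)
                 \<longlonglongrightarrow> 0)"
    proof (rule AE_mp[OF _ AE_I2], intro impI)
      fix \<omega> assume H: "(\<forall>i. snd (Z i \<omega>) \<in> S \<or> snd (Z i \<omega>) = all_missing)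
       \<and> (\<forall>m\<in>S. (\<lambda>n. (\<Sum>i<n. ind m (Z i \<omega>)) / real n) \<longlonglongrightarrow> pm m)
       \<and> (\<forall>m\<in>S. \<forall>d\<in>Dn. (\<lambda>n. (\<Sum>i<n. d \<bullet> g m (Z i \<omega>)) / real n) \<longlonglongrightarrow> d \<bullet> \<mu> m)"
      define an where "an n m = (\<Sum>i<n. ind m (Z i \<omega>)) / real n" for n m
      define vn where "vn n m = (1 / real n) *\<^sub>R (\<Sum>i<n. g m (Z i \<omega>))" for n m
      have van: "m \<in> S' - S \<Longrightarrow> an n m = 0 \<and> vn n m = 0" for n m
      proof -
        assume m: "m \<in> S' - S"
        have "ind m (Z i \<omega>) = 0" for i using H m by (auto simp: ind_eq S'_def)
        then show ?thesis by (simp add: an_def vn_def g_def)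
      qed
      have emp: "(\<lambda>\<theta>. (1 / real n) * (\<Sum>i<n. ell phi P (Z i \<omega>) \<theta>)) = F (an n) (vn n)" for n
      proof
        fix \<theta>
        have "(1 / real n) * (\<Sum>i<n. ell phi P (Z i \<omega>) \<theta>)
           = (1 / real n) * (\<Sum>i<n. \<Sum>m\<in>S'. ind m (Z i \<omega>) * (e m \<theta> \<bullet> e m \<theta>) + (-2) * (e m \<theta> \<bullet> g m (Z i \<omega>)))"
          by (simp add: ell_dec)
        also have "\<dots> = (\<Sum>m\<in>S'. (1 / real n) * (\<Sum>i<n. ind m (Z i \<omega>) * (e m \<theta> \<bullet> e m \<theta>) + (-2) * (e m \<theta> \<bullet> g m (Z i \<omega>))))"
          unfolding sum_distrib_left by (rule sum.swap)
        also have "\<dots> = (\<Sum>m\<in>S'. an n m * (e m \<theta> \<bullet> e m \<theta>) + (-2) * (e m \<theta> \<bullet> vn n m))"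
        proof (rule sum.cong[OF refl])
          fix m
          have s1: "(\<Sum>i<n. ind m (Z i \<omega>) * (e m \<theta> \<bullet> e m \<theta>) + (-2) * (e m \<theta> \<bullet> g m (Z i \<omega>)))
             = (\<Sum>i<n. ind m (Z i \<omega>)) * (e m \<theta> \<bullet> e m \<theta>) + (-2) * (e m \<theta> \<bullet> (\<Sum>i<n. g m (Z i \<omega>)))"
            by (simp add: sum.distrib sum_distrib_right sum_distrib_left inner_sum_right sum_subtractf sum_negf)
          show "(1 / real n) * (\<Sum>i<n. ind m (Z i \<omega>) * (e m \<theta> \<bullet> e m \<theta>) + (-2) * (e m \<theta> \<bullet> g m (Z i \<omega>)))
             = an n m * (e m \<theta> \<bullet> e m \<theta>) + (-2) * (e m \<theta> \<bullet> vn n m)"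
            unfolding s1 an_def vn_def inner_scaleR_right by (simp add: algebra_simps)
        qed
        also have "\<dots> = F (an n) (vn n) \<theta>" by (rule red) (use van in auto)
        finally show "(1 / real n) * (\<Sum>i<n. ell phi P (Z i \<omega>) \<theta>) = F (an n) (vn n) \<theta>" .
      qed
      show "(\<forall>n\<ge>1. \<forall>\<theta>\<in>K. \<exists>H. has_hessian_at
              (\<lambda>\<theta>. (1 / real n) * (\<Sum>i<n. ell phi P (Z i \<omega>) \<theta>)) H \<theta>)
         \<and> (\<forall>j k. (\<lambda>n. SUP \<theta>\<in>K. ereal \<bar>second_partial (\<lambda>\<theta>. (1 / real n) * (\<Sum>i<n. ell phi P (Z i \<omega>) \<theta>)) k j \<theta>
                         - second_partial (\<lambda>\<theta>. \<integral>z. ell phi P z \<theta> \<partial>(distr Pr obs_space (Z 0))) k j \<theta>\<bar>)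
                 \<longlonglongrightarrow> 0)"
      proof (rule conjI)
        show "\<forall>n\<ge>1. \<forall>\<theta>\<in>K. \<exists>H. has_hessian_at (\<lambda>\<theta>. (1 / real n) * (\<Sum>i<n. ell phi P (Z i \<omega>) \<theta>)) H \<theta>"
          unfolding emp using hess_ex by blast
      next
        show "\<forall>j k. (\<lambda>n. SUP \<theta>\<in>K. ereal \<bar>second_partial (\<lambda>\<theta>. (1 / real n) * (\<Sum>i<n. ell phi P (Z i \<omega>) \<theta>)) k j \<theta>
                         - second_partial (\<lambda>\<theta>. \<integral>z. ell phi P z \<theta> \<partial>(distr Pr obs_space (Z 0))) k j \<theta>\<bar>)
                 \<longlonglongrightarrow> 0"
        proof (intro allI)
        fix j k
        define W where "W m \<theta> = blinfun_apply (blinfun_apply (D2 m \<theta>) (axis k 1)) (axis j 1)" for m \<theta>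
        define Q where "Q m \<theta> = Qf (e m) (D1 m) (D2 m) k j \<theta>" for m \<theta>
        have diff: "second_partial (\<lambda>\<theta>. (1 / real n) * (\<Sum>i<n. ell phi P (Z i \<omega>) \<theta>)) k j \<theta>
                         - second_partial (\<lambda>\<theta>. \<integral>z. ell phi P z \<theta> \<partial>(distr Pr obs_space (Z 0))) k j \<theta>
           = (\<Sum>m\<in>S. (an n m - pm m) * Q m \<theta> + (-2) * (W m \<theta> \<bullet> (vn n m - \<mu> m)))" if th: "\<theta> \<in> K" for n \<theta>
        proof -
          have "(\<lambda>\<theta>. \<integral>z. ell phi P z \<theta> \<partial>(distr Pr obs_space (Z 0))) = F pm \<mu>" using pop by (simp add: \<nu>_def)
          then show ?thesis
            unfolding emp using sp[OF th]
            by (simp add: Q_def W_def sum_subtractf[symmetric] inner_diff_right algebra_simps)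
        qed
        have Qbd: "\<forall>m\<in>S. \<exists>B. \<forall>\<theta>\<in>K. \<bar>Q m \<theta>\<bar> \<le> B"
        proof
          fix m assume m: "m \<in> S"
          have "continuous_on K (Q m)" unfolding Q_def[abs_def] by (rule C2_cont(1)[OF O(1) DDe[OF m] KO])
          then have "compact (Q m ` K)" using K(1) by (rule compact_continuous_image)
          then obtain B where "\<forall>x\<in>Q m ` K. norm x \<le> B" using compact_imp_bounded bounded_iff by metis
          then show "\<exists>B. \<forall>\<theta>\<in>K. \<bar>Q m \<theta>\<bar> \<le> B" by auto
        qed
        then obtain BQ where BQ: "\<And>m \<theta>. m \<in> S \<Longrightarrow> \<theta> \<in> K \<Longrightarrow> \<bar>Q m \<theta>\<bar> \<le> BQ m"
          using bchoice[OF Qbd] by blast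
        have vn_bd: "norm (vn n m) \<le> 1" for n m
        proof (cases "n = 0")
          case True then show ?thesis by (simp add: vn_def)
        next
          case False
          have "norm (\<Sum>i<n. g m (Z i \<omega>)) \<le> (\<Sum>i<n. norm (g m (Z i \<omega>)))" by (rule norm_sum)
          also have "\<dots> \<le> (\<Sum>i<n. 1)" by (intro sum_mono g_bd1)
          finally show ?thesis using False by (simp add: vn_def divide_simps)
        qed
        have x_bd: "norm (vn n m - \<mu> m) \<le> 2" for n m
          using norm_triangle_ineq4[of "vn n m" "\<mu> m"] vn_bd[of n m] mu_bd[of m] pm1[of m] by linarith
        show "(\<lambda>n. SUP \<theta>\<in>K. ereal \<bar>second_partial (\<lambda>\<theta>. (1 / real n) * (\<Sum>i<n. ell phi P (Z i \<omega>) \<theta>)) k j \<theta>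
                         - second_partial (\<lambda>\<theta>. \<integral>z. ell phi P z \<theta> \<partial>(distr Pr obs_space (Z 0))) k j \<theta>\<bar>) \<longlonglongrightarrow> 0"
        proof (rule sup_ereal_tendsto[OF Kne])
          fix \<epsilon> :: real assume e: "\<epsilon> > 0"
          have "\<forall>\<^sub>F n in sequentially. \<forall>\<theta>\<in>K. \<bar>\<Sum>m\<in>S. (an n m - pm m) * Q m \<theta> + (-2) * (W m \<theta> \<bullet> (vn n m - \<mu> m))\<bar> \<le> \<epsilon>"
          proof (rule sum_unif[OF finS(1) BQ _ _ e, where \<alpha> = "\<lambda>m n. an n m - pm m" and \<beta> = "\<lambda>m n \<theta>. W m \<theta> \<bullet> (vn n m - \<mu> m)"])
            fix m assume m: "m \<in> S"
            show "(\<lambda>n. an n m - pm m) \<longlonglongrightarrow> 0"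
              using H m unfolding an_def by (intro LIM_zero) blast
            fix \<epsilon>' :: real assume e': "\<epsilon>' > 0"
            have weak: "(\<lambda>n. w \<bullet> (vn n m - \<mu> m)) \<longlonglongrightarrow> 0" for w
            proof (rule weak_dense[OF Dn_dense x_bd])
              fix d assume d: "d \<in> Dn"
              have "(\<lambda>n. (\<Sum>i<n. d \<bullet> g m (Z i \<omega>)) / real n) \<longlonglongrightarrow> d \<bullet> \<mu> m" using H m d by blast
              moreover have "d \<bullet> (vn n m - \<mu> m) = (\<Sum>i<n. d \<bullet> g m (Z i \<omega>)) / real n - d \<bullet> \<mu> m" for n
                by (simp add: vn_def inner_diff_right inner_sum_right sum_divide_distrib)
              ultimately show "(\<lambda>n. d \<bullet> (vn n m - \<mu> m)) \<longlonglongrightarrow> 0" by (simp add: LIM_zero)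
            qed
            have cW: "compact (W m ` K)"
              using compact_continuous_image[OF C2_cont(2)[OF O(1) DDe[OF m] KO] K(1)] by (simp add: W_def)
            have "\<forall>\<^sub>F n in sequentially. \<forall>v\<in>W m ` K. \<bar>v \<bullet> (vn n m - \<mu> m)\<bar> < \<epsilon>'"
              by (rule unif_compact[OF cW x_bd weak e'])
            then show "\<forall>\<^sub>F n in sequentially. \<forall>\<theta>\<in>K. \<bar>W m \<theta> \<bullet> (vn n m - \<mu> m)\<bar> < \<epsilon>'"
              by eventually_elim auto
          qed
          then show "\<forall>\<^sub>F n in sequentially. \<forall>\<theta>\<in>K. \<bar>second_partial (\<lambda>\<theta>. (1 / real n) * (\<Sum>i<n. ell phi P (Z i \<omega>) \<theta>)) k j \<theta>
                         - second_partial (\<lambda>\<theta>. \<integral>z. ell phi P z \<theta> \<partial>(distr Pr obs_space (Z 0))) k j \<theta>\<bar> \<le> \<epsilon>"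
          proof eventually_elim
            case (elim n)
            show ?case
            proof (rule ballI)
              fix \<theta> assume th: "\<theta> \<in> K"
              show "\<bar>second_partial (\<lambda>\<theta>. (1 / real n) * (\<Sum>i<n. ell phi P (Z i \<omega>) \<theta>)) k j \<theta>
                         - second_partial (\<lambda>\<theta>. \<integral>z. ell phi P z \<theta> \<partial>(distr Pr obs_space (Z 0))) k j \<theta>\<bar> \<le> \<epsilon>"
                unfolding diff[OF th] using elim th by blast
            qed
          qed
        qed
      qed
      qed
    qed
  qed
qed

end
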